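(* Let $\mathbf{A} = [\mathbf{A}^1 \dots \mathbf{A}^S] \in \mathbb{R}^{m\times n}$ with $\mathbf{A}^s \in \mathbb{R}^{m \times n^s}$ held at site $s\in\{1,\dots,S\}$, $n = \sum_s n^s$, and let $k \ge 1$ and $I \ge 1$ be integers. Let $\mathbf{G}_0^{\mathrm{init}} \in \mathbb{R}^{n\times k}$ be an initial matrix, and let $\mathbf{G}_0^{s,\mathrm{init}}$ denote its block of rows corresponding to site $s$. Let $\mathtt{orthonormalize}$ denote a fixed orthonormalization routine for $m\times k$ matrices and let $\mathrm{GS}$ denote (centralized) Gram-Schmidt orthonormalization of the columns of a matrix. Centralized vertical subspace iteration (with orthonormalization): $\mathbf{G}_0 = \mathrm{GS}(\mathbf{G}_0^{\mathrm{init}})$; for $i = 1,\dots,I$: $\mathbf{H}_i = \mathtt{orthonormalize}(\mathbf{A}\mathbf{G}_{i-1})$ and $\mathbf{G}_i = \mathrm{GS}(\mathbf{A}^\top \mathbf{H}_i)$. Federated vertical subspace iteration (with orthonormalization): the sites start with $\mathbf{G}_0^{s,\mathrm{init}}$ and orthonormalize them jointly via federated Gram-Schmidt, obtaining $\tilde{\mathbf{G}}_0^s$; for $i=1,\dots,I$: each site computes $\tilde{\mathbf{H}}_i^s = \mathbf{A}^s \tilde{\mathbf{G}}_{i-1}^s$, the aggregator computes $\tilde{\mathbf{H}}_i = \mathtt{orthonormalize}\big(\sum_{s=1}^S \tilde{\mathbf{H}}_i^s\big)$ and sends it to all sites, each site computes $(\mathbf{A}^s)^\top \tilde{\mathbf{H}}_i$,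 and these partial matrices are orthonormalized jointly via federated Gram-Schmidt to give $\tilde{\mathbf{G}}_i^s$. Here federated Gram-Schmidt applied to row blocks $\mathbf{V}^s$ (with columns $\mathbf{v}_i^s$) of a matrix $\mathbf{V}\in\mathbb{R}^{n\times k}$ is the procedure: sites set $\mathbf{u}_1^s=\mathbf{v}_1^s$, $n_1^s = (\mathbf{u}_1^s)^\top\mathbf{u}_1^s$, the aggregator forms $n_1=\sum_s n_1^s$; for $i=2,\dots,k$ sites compute $r_{ij}^s = (\mathbf{u}_j^s)^\top\mathbf{v}_i^s/n_j$ ($j<i$), the aggregator forms $r_{ij}=\sum_s r_{ij}^s$, sites compute $\mathbf{u}_i^s = \mathbf{v}_i^s - \sum_{j<i} r_{ij}\mathbf{u}_j^s$ and $n_i^s = (\mathbf{u}_i^s)^\top\mathbf{u}_i^s$, the aggregator forms $n_i = \sum_s n_i^s$; finally each site outputs $[\mathbf{u}_1^s/\sqrt{n_1}\dots\mathbf{u}_k^s/\sqrt{n_k}]$. Assume all Gram-Schmidt orthonormalizations above are well defined (the matrices being orthonormalized have linearly independent columns). Then centralized and federated vertical subspace iteration are equivalent: for every $i \in \{0,\dots,I\}$ and every site $s$, $\tilde{\mathbf{G}}_i^s$ equals the block of rows of $\mathbf{G}_i$ corresponding to site $s$, and for every $i\in\{1,\dots,I\}$, $\tilde{\mathbf{H}}_i = \mathbf{H}_i$.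
   Context: Setting: a star-shaped federated network with $S$ client sites and one aggregator; the columns of the data matrix $\mathbf{A}$ (samples) are vertically partitioned among the sites. "Same initialization" means both algorithms start from the same random initial matrix (same random seeds), the federated one with its row blocks distributed to the sites. The columns of $\mathbf{H}_i$ are candidate left singular vectors and those of $\mathbf{G}_i$ candidate right singular vectors of $\mathbf{A}$. *)

theory Defs
  imports "Jordan_Normal_Form.Matrix"
begin

text \<open>Sites are indexed 0..<S; site s holds ns s columns of A (samples).
  The offset of site s in the sample index range is the sum of the sizes of previous sites.\<close>

definition off :: "(nat \<Rightarrow> nat) \<Rightarrow> nat \<Rightarrow> nat" where
  "off ns s = (\<Sum>t<s. ns t)"

definition row_block :: "(nat \<Rightarrow> nat) \<Rightarrow> nat \<Rightarrow> real mat \<Rightarrow> real mat" where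
  "row_block ns s G = mat (ns s) (dim_col G) (\<lambda>(i,j). G $$ (off ns s + i, j))"

definition col_block :: "(nat \<Rightarrow> nat) \<Rightarrow> nat \<Rightarrow> real mat \<Rightarrow> real mat" where
  "col_block ns s A = mat (dim_row A) (ns s) (\<lambda>(i,j). A $$ (i, off ns s + j))"

definition lin_indep_cols :: "real mat \<Rightarrow> bool" where
  "lin_indep_cols M \<longleftrightarrow>
     (\<forall>c \<in> carrier_vec (dim_col M). M *\<^sub>v c = 0\<^sub>v (dim_row M) \<longrightarrow> c = 0\<^sub>v (dim_col M))"

fun gs_us :: "real mat \<Rightarrow> nat \<Rightarrow> real vec list" where
  "gs_us V 0 = []"
| "gs_us V (Suc i) =
    (let us = gs_us V i; v = col V i
     in us @ [vec (dim_row V) (\<lambda>q. v $ q - (\<Sum>j<i. ((us ! j \<bullet> v) / (us ! j \<bullet> us ! j)) * (us ! j) $ q))])"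

definition GS :: "real mat \<Rightarrow> real mat" where
  "GS V = (let us = gs_us V (dim_col V)
           in mat (dim_row V) (dim_col V) (\<lambda>(q,c). (us ! c) $ q / sqrt (us ! c \<bullet> us ! c)))"

definition fgs_norm :: "nat \<Rightarrow> (nat \<Rightarrow> real vec list) \<Rightarrow> nat \<Rightarrow> real" where
  "fgs_norm S U j = (\<Sum>s<S. U s ! j \<bullet> U s ! j)"

fun fgs_us :: "nat \<Rightarrow> (nat \<Rightarrow> real mat) \<Rightarrow> nat \<Rightarrow> nat \<Rightarrow> real vec list" where
  "fgs_us S Vs 0 = (\<lambda>s. [])"
| "fgs_us S Vs (Suc i) =
    (let U = fgs_us S Vs i;
         r = (\<lambda>j. \<Sum>s<S. (U s ! j \<bullet> col (Vs s) i) / fgs_norm S U j)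
     in (\<lambda>s. U s @ [vec (dim_row (Vs s))
                        (\<lambda>q. col (Vs s) i $ q - (\<Sum>j<i. r j * (U s ! j) $ q))]))"

definition fed_GS :: "nat \<Rightarrow> nat \<Rightarrow> (nat \<Rightarrow> real mat) \<Rightarrow> nat \<Rightarrow> real mat" where
  "fed_GS S k Vs s = (let U = fgs_us S Vs k
                      in mat (dim_row (Vs s)) k (\<lambda>(q,c). (U s ! c) $ q / sqrt (fgs_norm S U c)))"

definition sum_mats :: "nat \<Rightarrow> nat \<Rightarrow> nat \<Rightarrow> (nat \<Rightarrow> real mat) \<Rightarrow> real mat" where
  "sum_mats nr nc S F = mat nr nc (\<lambda>(r,c). \<Sum>s<S. F s $$ (r,c))"

primrec cG :: "real mat \<Rightarrow> (real mat \<Rightarrow> real mat) \<Rightarrow> real mat \<Rightarrow> nat \<Rightarrow> real mat" where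
  "cG A orth Ginit 0 = GS Ginit"
| "cG A orth Ginit (Suc i) = GS (transpose_mat A * orth (A * cG A orth Ginit i))"

definition cH :: "real mat \<Rightarrow> (real mat \<Rightarrow> real mat) \<Rightarrow> real mat \<Rightarrow> nat \<Rightarrow> real mat" where
  "cH A orth Ginit i = orth (A * cG A orth Ginit (i - 1))"  \<comment> \<open>meaningful for i \<ge> 1\<close>

primrec fG :: "real mat \<Rightarrow> (nat \<Rightarrow> nat) \<Rightarrow> nat \<Rightarrow> nat \<Rightarrow> (real mat \<Rightarrow> real mat) \<Rightarrow> real mat
               \<Rightarrow> nat \<Rightarrow> nat \<Rightarrow> real mat" where
  "fG A ns S k orth Ginit 0 = fed_GS S k (\<lambda>s. row_block ns s Ginit)"
| "fG A ns S k orth Ginit (Suc i) =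
     (let Ht = orth (sum_mats (dim_row A) k S (\<lambda>s. col_block ns s A * fG A ns S k orth Ginit i s))
      in fed_GS S k (\<lambda>s. transpose_mat (col_block ns s A) * Ht))"

definition fH :: "real mat \<Rightarrow> (nat \<Rightarrow> nat) \<Rightarrow> nat \<Rightarrow> nat \<Rightarrow> (real mat \<Rightarrow> real mat) \<Rightarrow> real mat
               \<Rightarrow> nat \<Rightarrow> real mat" where
  "fH A ns S k orth Ginit i =
     orth (sum_mats (dim_row A) k S (\<lambda>s. col_block ns s A * fG A ns S k orth Ginit (i - 1) s))"

end

theory Submission
  imports Defs
begin

lemma off_Suc: "off ns (Suc s) = off ns s + ns s"
  by (simp add: off_def)

lemma block_sum:
  fixes f :: "nat \<Rightarrow> real"
  shows "(\<Sum>s<S. \<Sum>q<ns s. f (off ns s + q)) = (\<Sum>p<(\<Sum>s<S. ns s). f p)"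
proof (induction S)
  case 0 then show ?case by simp
next
  case (Suc S)
  have "(\<Sum>p<(\<Sum>s<Suc S. ns s). f p) = (\<Sum>p<(\<Sum>s<S. ns s) + ns S. f p)" by simp
  also have "\<dots> = (\<Sum>p<(\<Sum>s<S. ns s). f p) + (\<Sum>q<ns S. f (off ns S + q))"
  proof -
    have "(\<Sum>p<(\<Sum>s<S. ns s) + ns S. f p) = (\<Sum>p<(\<Sum>s<S. ns s). f p) + (\<Sum>p=(\<Sum>s<S. ns s)..<(\<Sum>s<S. ns s) + ns S. f p)"
      by (simp add: atLeast0LessThan[symmetric] sum.atLeastLessThan_concat)
    also have "(\<Sum>p=(\<Sum>s<S. ns s)..<(\<Sum>s<S. ns s) + ns S. f p) = (\<Sum>q=0..<ns S. f (q + (\<Sum>s<S. ns s)))"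
      using sum.shift_bounds_nat_ivl[of f 0 "(\<Sum>s<S. ns s)" "ns S"] by (simp add: add.commute)
    finally show ?thesis by (simp add: off_def atLeast0LessThan add.commute)
  qed
  finally show ?case using Suc by simp
qed

lemma off_le: "s < S \<Longrightarrow> off ns s + ns s \<le> (\<Sum>t<S. ns t)"
proof -
  assume "s < S"
  then have "{..<Suc s} \<subseteq> {..<S}" by auto
  then have "(\<Sum>t<Suc s. ns t) \<le> (\<Sum>t<S. ns t)" by (intro sum_mono2) auto
  then show ?thesis by (simp add: off_def)
qed

definition blk :: "(nat \<Rightarrow> nat) \<Rightarrow> nat \<Rightarrow> real vec \<Rightarrow> real vec" where
  "blk ns s v = vec (ns s) (\<lambda>q. v $ (off ns s + q))"

lemma blk_scalar:
  assumes "dim_vec u = (\<Sum>t<S. ns t)" "dim_vec v = (\<Sum>t<S. ns t)"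
  shows "(\<Sum>s<S. blk ns s u \<bullet> blk ns s v) = u \<bullet> v"
  using block_sum[where S=S and ns=ns and f="\<lambda>p. u $ p * v $ p"] assms
  by (simp add: blk_def scalar_prod_def atLeast0LessThan)

lemma gs_us_len[simp]: "length (gs_us V i) = i"
  by (induction i) (simp_all add: Let_def)

lemma gs_us_dim: "j < i \<Longrightarrow> dim_vec (gs_us V i ! j) = dim_row V"
  by (induction i) (auto simp add: Let_def nth_append less_Suc_eq)

lemma col_row_block: "i < dim_col V \<Longrightarrow> off ns s + ns s \<le> dim_row V \<Longrightarrow> col (row_block ns s V) i = blk ns s (col V i)"
  by (intro eq_vecI) (auto simp: row_block_def blk_def col_def)

lemma fgs_blocks:
  assumes V: "V \<in> carrier_mat n k" and n: "n = (\<Sum>t<S. ns t)"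
  shows "i \<le> k \<Longrightarrow> s < S \<Longrightarrow> fgs_us S (\<lambda>s. row_block ns s V) i s = map (blk ns s) (gs_us V i)"
proof (induction i arbitrary: s)
  case 0 then show ?case by simp
next
  case (Suc i)
  define us where "us = gs_us V i"
  define v where "v = col V i"
  define U where "U = fgs_us S (\<lambda>s. row_block ns s V) i"
  have IH: "\<And>s. s < S \<Longrightarrow> U s = map (blk ns s) us" using Suc by (simp add: U_def us_def)
  have ik: "i < k" using Suc by simp
  have dimus: "\<And>j. j < i \<Longrightarrow> dim_vec (us ! j) = n" using V by (simp add: us_def gs_us_dim)
  have dimv: "dim_vec v = n" using V by (simp add: v_def)
  have "s < S" using Suc by simp
  have le: "off ns s + ns s \<le> n" using off_le[OF \<open>s < S\<close>] n by simp
  have nrm: "fgs_norm S U j = us ! j \<bullet> us ! j" if "j < i" for j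
  proof -
    have "fgs_norm S U j = (\<Sum>s<S. blk ns s (us ! j) \<bullet> blk ns s (us ! j))"
      unfolding fgs_norm_def using IH that by (intro sum.cong) (auto simp: us_def)
    also have "\<dots> = us ! j \<bullet> us ! j" using blk_scalar dimus that n by simp
    finally show ?thesis .
  qed
  have rr: "(\<Sum>s<S. (U s ! j \<bullet> col (row_block ns s V) i) / fgs_norm S U j) = (us ! j \<bullet> v) / (us ! j \<bullet> us ! j)"
    if "j < i" for j
  proof -
    have "(\<Sum>s<S. (U s ! j \<bullet> col (row_block ns s V) i) / fgs_norm S U j)
        = (\<Sum>s<S. blk ns s (us ! j) \<bullet> blk ns s v) / (us ! j \<bullet> us ! j)"
      unfolding sum_divide_distrib nrm[OF that]
      using IH that ik V off_le[of _ S ns] n by (intro sum.cong) (auto simp: us_def v_def col_row_block)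
    also have "\<dots> = (us ! j \<bullet> v) / (us ! j \<bullet> us ! j)" using blk_scalar dimus dimv that n by simp
    finally show ?thesis .
  qed
  have "fgs_us S (\<lambda>s. row_block ns s V) (Suc i) s = U s @ [vec (dim_row (row_block ns s V))
      (\<lambda>q. col (row_block ns s V) i $ q - (\<Sum>j<i. (\<Sum>s<S. (U s ! j \<bullet> col (row_block ns s V) i) / fgs_norm S U j) * (U s ! j) $ q))]"
    by (simp only: fgs_us.simps Let_def U_def)
  also have "\<dots> = U s @ [vec (ns s)
      (\<lambda>q. blk ns s v $ q - (\<Sum>j<i. ((us ! j \<bullet> v) / (us ! j \<bullet> us ! j)) * (U s ! j) $ q))]"
  proof -
    have cb: "col (row_block ns s V) i = blk ns s v" using ik V le by (simp add: col_row_block v_def)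
    have dr: "dim_row (row_block ns s V) = ns s" by (simp add: row_block_def)
    show ?thesis unfolding cb dr using rr[unfolded cb] by simp
  qed
  also have "\<dots> = map (blk ns s) us @ [blk ns s (vec n (\<lambda>q. v $ q - (\<Sum>j<i. ((us ! j \<bullet> v) / (us ! j \<bullet> us ! j)) * (us ! j) $ q)))]"
    using IH[OF \<open>s < S\<close>] le by (auto simp: blk_def us_def intro!: sum.cong)
  also have "\<dots> = map (blk ns s) (gs_us V (Suc i))"
    using V by (simp add: Let_def us_def v_def)
  finally show ?case .
qed

lemma fed_GS_blocks:
  assumes V: "V \<in> carrier_mat n k" and n: "n = (\<Sum>t<S. ns t)" and s: "s < S"
  shows "fed_GS S k (\<lambda>s. row_block ns s V) s = row_block ns s (GS V)"
proof -
  define us where "us = gs_us V k"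
  define U where "U = fgs_us S (\<lambda>s. row_block ns s V) k"
  have IH: "\<And>s. s < S \<Longrightarrow> U s = map (blk ns s) us"
    using fgs_blocks[OF V n] by (simp add: U_def us_def)
  have dimus: "\<And>j. j < k \<Longrightarrow> dim_vec (us ! j) = n" using V by (simp add: us_def gs_us_dim)
  have nrm: "fgs_norm S U j = us ! j \<bullet> us ! j" if "j < k" for j
  proof -
    have "fgs_norm S U j = (\<Sum>s<S. blk ns s (us ! j) \<bullet> blk ns s (us ! j))"
      unfolding fgs_norm_def using IH that by (intro sum.cong) (auto simp: us_def)
    also have "\<dots> = us ! j \<bullet> us ! j" using blk_scalar dimus that n by simp
    finally show ?thesis .
  qed
  have le: "off ns s + ns s \<le> n" using off_le[OF s] n by simp
  show ?thesis
    unfolding fed_GS_def GS_def Let_def U_def[symmetric] us_def[symmetric]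
    using V IH[OF s] nrm le
    by (intro eq_matI) (auto simp: row_block_def blk_def us_def)
qed

lemma block_mult:
  assumes A: "A \<in> carrier_mat m n" and G: "G \<in> carrier_mat n k" and n: "n = (\<Sum>t<S. ns t)"
  shows "sum_mats m k S (\<lambda>s. col_block ns s A * row_block ns s G) = A * G"
proof (intro eq_matI)
  fix r c assume rc: "r < dim_row (A * G)" "c < dim_col (A * G)"
  have "sum_mats m k S (\<lambda>s. col_block ns s A * row_block ns s G) $$ (r, c)
     = (\<Sum>s<S. \<Sum>q<ns s. A $$ (r, off ns s + q) * G $$ (off ns s + q, c))"
    using rc A G by (auto simp: sum_mats_def col_block_def row_block_def scalar_prod_def atLeast0LessThan intro!: sum.cong)
  also have "\<dots> = (\<Sum>p<n. A $$ (r, p) * G $$ (p, c))"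
    using block_sum[where f="\<lambda>p. A $$ (r, p) * G $$ (p, c)" and S=S and ns=ns] n by simp
  also have "\<dots> = (A * G) $$ (r, c)"
    using rc A G by (auto simp: scalar_prod_def atLeast0LessThan intro!: sum.cong)
  finally show "sum_mats m k S (\<lambda>s. col_block ns s A * row_block ns s G) $$ (r, c) = (A * G) $$ (r, c)" .
qed (use A G in \<open>auto simp: sum_mats_def\<close>)

lemma transpose_block:
  assumes A: "A \<in> carrier_mat m n" and H: "H \<in> carrier_mat m k" and le: "off ns s + ns s \<le> n"
  shows "transpose_mat (col_block ns s A) * H = row_block ns s (transpose_mat A * H)"
  using A H le
  by (intro eq_matI) (auto simp: col_block_def row_block_def scalar_prod_def)

lemma fgs_cong:
  assumes "\<And>s. s < S \<Longrightarrow> Vs s = Vs' s"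
  shows "\<forall>s<S. fgs_us S Vs i s = fgs_us S Vs' i s"
proof (induction i)
  case 0 then show ?case by simp
next
  case (Suc i)
  have nr: "fgs_norm S (fgs_us S Vs i) j = fgs_norm S (fgs_us S Vs' i) j" for j
    unfolding fgs_norm_def using Suc by (intro sum.cong) auto
  have rr: "(\<Sum>s<S. (fgs_us S Vs i s ! j \<bullet> col (Vs s) i) / fgs_norm S (fgs_us S Vs i) j)
    = (\<Sum>s<S. (fgs_us S Vs' i s ! j \<bullet> col (Vs' s) i) / fgs_norm S (fgs_us S Vs' i) j)" for j
    unfolding nr using Suc assms by (intro sum.cong) auto
  show ?case
    by (simp only: fgs_us.simps Let_def rr) (use Suc assms in auto)
qed

lemma fed_GS_cong:
  assumes "\<And>s. s < S \<Longrightarrow> Vs s = Vs' s" "s < S"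
  shows "fed_GS S k Vs s = fed_GS S k Vs' s"
proof -
  have U: "\<forall>s<S. fgs_us S Vs k s = fgs_us S Vs' k s" by (rule fgs_cong) (use assms in auto)
  have nr: "fgs_norm S (fgs_us S Vs k) j = fgs_norm S (fgs_us S Vs' k) j" for j
    unfolding fgs_norm_def using U by (intro sum.cong) auto
  show ?thesis unfolding fed_GS_def Let_def nr using U assms by simp
qed

lemma sum_mats_cong:
  assumes "\<And>s. s < S \<Longrightarrow> F s = F' s"
  shows "sum_mats a b S F = sum_mats a b S F'"
  unfolding sum_mats_def using assms by simp

lemma GS_carrier: "GS V \<in> carrier_mat (dim_row V) (dim_col V)"
  by (simp add: GS_def Let_def)

theorem mainTheorem2:
  fixes A Ginit :: "real mat" and ns :: "nat \<Rightarrow> nat" and S m n k I :: nat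
    and orth :: "real mat \<Rightarrow> real mat"
  assumes "A \<in> carrier_mat m n"
    and "n = (\<Sum>s<S. ns s)"
    and "k \<ge> 1" and "I \<ge> 1"
    and "Ginit \<in> carrier_mat n k"
    and "\<forall>M \<in> carrier_mat m k. orth M \<in> carrier_mat m k"
    and "lin_indep_cols Ginit"
    and "\<forall>i \<in> {1..I}. lin_indep_cols (transpose_mat A * cH A orth Ginit i)"
  shows "(\<forall>i \<le> I. \<forall>s < S. fG A ns S k orth Ginit i s = row_block ns s (cG A orth Ginit i))
       \<and> (\<forall>i \<in> {1..I}. fH A ns S k orth Ginit i = cH A orth Ginit i)"
proof -
  note A = assms(1) and n = assms(2) and Gi = assms(5) and orth = assms(6)
  have P: "cG A orth Ginit i \<in> carrier_mat n k \<and>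
      (\<forall>s<S. fG A ns S k orth Ginit i s = row_block ns s (cG A orth Ginit i))" for i
  proof (induction i)
    case 0
    have "GS Ginit \<in> carrier_mat n k" using GS_carrier[of Ginit] Gi by simp
    then show ?case using fed_GS_blocks[OF Gi n] by simp
  next
    case (Suc i)
    define G where "G = cG A orth Ginit i"
    define H where "H = orth (A * G)"
    have G: "G \<in> carrier_mat n k" using Suc by (simp add: G_def)
    have H: "H \<in> carrier_mat m k" using orth A G by (simp add: H_def)
    have sm: "sum_mats (dim_row A) k S (\<lambda>s. col_block ns s A * fG A ns S k orth Ginit i s) = A * G"
      using Suc A block_mult[OF A G n] sum_mats_cong[of S "\<lambda>s. col_block ns s A * fG A ns S k orth Ginit i s"
        "\<lambda>s. col_block ns s A * row_block ns s G"] by (simp add: G_def)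
    have V: "transpose_mat A * H \<in> carrier_mat n k" using A H by simp
    have cG: "cG A orth Ginit (Suc i) = GS (transpose_mat A * H)" by (simp add: H_def G_def)
    have "fG A ns S k orth Ginit (Suc i) s = row_block ns s (cG A orth Ginit (Suc i))" if s: "s < S" for s
    proof -
      have "fG A ns S k orth Ginit (Suc i) s = fed_GS S k (\<lambda>s. transpose_mat (col_block ns s A) * H) s"
        by (simp add: Let_def sm H_def)
      also have "\<dots> = fed_GS S k (\<lambda>s. row_block ns s (transpose_mat A * H)) s"
        using transpose_block[OF A H] off_le[of _ S ns] n s by (intro fed_GS_cong) auto
      also have "\<dots> = row_block ns s (cG A orth Ginit (Suc i))"
        unfolding cG by (rule fed_GS_blocks[OF V n s])
      finally show ?thesis .
    qed
    moreover have "cG A orth Ginit (Suc i) \<in> carrier_mat n k"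
      unfolding cG using GS_carrier[of "transpose_mat A * H"] V by (metis carrier_matD)
    ultimately show ?case by blast
  qed
  have "fH A ns S k orth Ginit i = cH A orth Ginit i" for i
  proof -
    define G where "G = cG A orth Ginit (i - 1)"
    have G: "G \<in> carrier_mat n k" using P by (simp add: G_def)
    have "sum_mats (dim_row A) k S (\<lambda>s. col_block ns s A * fG A ns S k orth Ginit (i - 1) s) = A * G"
      using P A block_mult[OF A G n] sum_mats_cong[of S "\<lambda>s. col_block ns s A * fG A ns S k orth Ginit (i - 1) s"
        "\<lambda>s. col_block ns s A * row_block ns s G"] by (simp add: G_def)
    then show ?thesis by (simp add: fH_def cH_def G_def)
  qed
  then show ?thesis using P by simp
qed

end
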